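(* Let $c\in\mathbb{R}\setminus\{0\}$ and let $\mathbf f_c:\mathbb{R}^2\to\mathbb{R}^2$ be $$\mathbf f_c(u,v)=\bigl(3v^2-3u^2-2cu,\ 6uv-2cv\bigr).$$ Let $\mathbf s=(s_1,s_2)$ be a point such that $\mathbf f_c(\mathbf x)=\mathbf s$ has exactly four distinct solutions $\mathbf x_i=(u_i,v_i)\in\mathbb{R}^2$, $i=1,\dots,4$, each with $\det(\mathrm{Jac}\,\mathbf f_c)(\mathbf x_i)\neq0$. Then, with $\mathfrak M_i=1/\det(\mathrm{Jac}\,\mathbf f_c)(\mathbf x_i)=\frac{1}{4c^2-36(u_i^2+v_i^2)}$, $$\mathfrak M_1+\mathfrak M_2+\mathfrak M_3+\mathfrak M_4=0.$$
   Context: $\mathbf f_c$ is the generic local form of a one-parameter family of maps between planes near an elliptic umbilic singularity; it is induced by the family of functions $F_{c,\mathbf s}(u,v)=s_1u+s_2v+c(u^2+v^2)+u^3-3uv^2$. The points $\mathbf s$ with four preimages form the four-image region bounded by the (three-cusped) caustic of $\mathbf f_c$. *)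

theory Defs
  imports "HOL-Analysis.Analysis"
begin

definition fc :: "real \<Rightarrow> real \<times> real \<Rightarrow> real \<times> real" where
  "fc c x = (let u = fst x; v = snd x in
     (3 * v^2 - 3 * u^2 - 2 * c * u, 6 * u * v - 2 * c * v))"

text \<open>Determinant of the Jacobian matrix of f_c at (u,v), written via its
  partial derivatives: d1/du = -6u-2c, d1/dv = 6v, d2/du = 6v, d2/dv = 6u-2c.\<close>
definition jac_det_fc :: "real \<Rightarrow> real \<times> real \<Rightarrow> real" where
  "jac_det_fc c x = (let u = fst x; v = snd x in
     (-6 * u - 2 * c) * (6 * u - 2 * c) - (6 * v) * (6 * v))"

end

theory Submission
  imports Defs
begin

lemma L2:
  fixes a b c d :: complex
  assumes "a\<noteq>b" "a\<noteq>c" "a\<noteq>d" "b\<noteq>c" "b\<noteq>d" "c\<noteq>d"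
  shows "1/((a-b)*(a-c)*(a-d)) + 1/((b-a)*(b-c)*(b-d)) + 1/((c-a)*(c-b)*(c-d)) + 1/((d-a)*(d-b)*(d-c)) = 0"
proof -
  have h: "a-b\<noteq>0" "a-c\<noteq>0" "a-d\<noteq>0" "b-c\<noteq>0" "b-d\<noteq>0" "c-d\<noteq>0"
          "b-a\<noteq>0" "c-a\<noteq>0" "d-a\<noteq>0" "c-b\<noteq>0" "d-b\<noteq>0" "d-c\<noteq>0" using assms by auto
  have e: "1/((a-b)*(a-c)*(a-d)) + 1/((b-a)*(b-c)*(b-d)) + 1/((c-a)*(c-b)*(c-d)) + 1/((d-a)*(d-b)*(d-c))
     = ((b-c)*(b-d)*(c-d) - (a-c)*(a-d)*(c-d) + (a-b)*(a-d)*(b-d) - (a-b)*(a-c)*(b-c)) / ((a-b)*(a-c)*(a-d)*(b-c)*(b-d)*(c-d))"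
    using h by (simp add: divide_simps) (simp add: algebra_simps)
  have "(b-c)*(b-d)*(c-d) - (a-c)*(a-d)*(c-d) + (a-b)*(a-d)*(b-d) - (a-b)*(a-c)*(b-c) = 0"
    by (simp add: algebra_simps)
  then show ?thesis using e by simp
qed

lemma L1:
  fixes z1 z2 z3 z4 A B C :: complex
  assumes "z1\<noteq>z2" "z1\<noteq>z3" "z1\<noteq>z4" "z2\<noteq>z3" "z2\<noteq>z4" "z3\<noteq>z4"
    and "27*z1^4 + A*z1^2 + B*z1 + C = 0" "27*z2^4 + A*z2^2 + B*z2 + C = 0"
    and "27*z3^4 + A*z3^2 + B*z3 + C = 0" "27*z4^4 + A*z4^2 + B*z4 + C = 0"
  shows "108*z1^3 + 2*A*z1 + B = 27*((z1-z2)*(z1-z3)*(z1-z4))"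
proof -
  have H: "27*(x^3+x^2*y+x*y^2+y^3) + A*(x+y) + B = 0" if "x\<noteq>y" "27*x^4 + A*x^2 + B*x + C = 0" "27*y^4 + A*y^2 + B*y + C = 0" for x y
  proof -
    have "(x-y)*(27*(x^3+x^2*y+x*y^2+y^3) + A*(x+y) + B) = (27*x^4 + A*x^2 + B*x + C) - (27*y^4 + A*y^2 + B*y + C)"
      by (simp add: algebra_simps power2_eq_square power3_eq_cube power4_eq_xxxx)
    with that show ?thesis by simp
  qed
  have h12: "27*(z1^3+z1^2*z2+z1*z2^2+z2^3) + A*(z1+z2) + B = 0" using H assms by blast
  have h13: "27*(z1^3+z1^2*z3+z1*z3^2+z3^3) + A*(z1+z3) + B = 0" using H assms by blast
  have h14: "27*(z1^3+z1^2*z4+z1*z4^2+z4^3) + A*(z1+z4) + B = 0" using H assms by blast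
  have G: "27*(x^2+y^2+w^2+x*y+x*w+y*w) + A = 0" if "y\<noteq>w" "27*(x^3+x^2*y+x*y^2+y^3) + A*(x+y) + B = 0"
     "27*(x^3+x^2*w+x*w^2+w^3) + A*(x+w) + B = 0" for x y w
  proof -
    have "(y-w)*(27*(x^2+y^2+w^2+x*y+x*w+y*w) + A) = (27*(x^3+x^2*y+x*y^2+y^3) + A*(x+y) + B) - (27*(x^3+x^2*w+x*w^2+w^3) + A*(x+w) + B)"
      by (simp add: algebra_simps power2_eq_square power3_eq_cube)
    with that show ?thesis by simp
  qed
  have g3: "27*(z1^2+z2^2+z3^2+z1*z2+z1*z3+z2*z3) + A = 0" using G[OF _ h12 h13] assms by blast
  have g4: "27*(z1^2+z2^2+z4^2+z1*z2+z1*z4+z2*z4) + A = 0" using G[OF _ h12 h14] assms by blast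
  have "(z3-z4)*(27*(z1+z2+z3+z4)) = (27*(z1^2+z2^2+z3^2+z1*z2+z1*z3+z2*z3) + A) - (27*(z1^2+z2^2+z4^2+z1*z2+z1*z4+z2*z4) + A)"
    by (simp add: algebra_simps power2_eq_square)
  also have "\<dots> = 0" using g3 g4 by simp
  finally have "(z3-z4)*(27*(z1+z2+z3+z4)) = 0" .
  hence "27*(z1+z2+z3+z4) = 0" using assms by simp
  hence "z1+z2+z3+z4 = 0" by (subst (asm) mult_eq_0_iff) simp
  moreover have "z4 = (z1+z2+z3+z4) - (z1+z2+z3)" by simp
  ultimately have e1: "z4 = -(z1+z2+z3)" by simp
  have eA: "A = -27*(z1^2+z2^2+z3^2+z1*z2+z1*z3+z2*z3)" 
  proof - have "A = (27*(z1^2+z2^2+z3^2+z1*z2+z1*z3+z2*z3) + A) - 27*(z1^2+z2^2+z3^2+z1*z2+z1*z3+z2*z3)" by simp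
    with g3 show ?thesis by simp qed
  have eB: "B = -27*(z1^3+z1^2*z2+z1*z2^2+z2^3) - A*(z1+z2)" 
  proof - have "B = (27*(z1^3+z1^2*z2+z1*z2^2+z2^3) + A*(z1+z2) + B) - 27*(z1^3+z1^2*z2+z1*z2^2+z2^3) - A*(z1+z2)" by simp
    with h12 show ?thesis by simp qed
  show ?thesis unfolding eB e1 eA by (simp add: algebra_simps power2_eq_square power3_eq_cube)
qed


lemma sol_facts:
  fixes c :: real and s x :: "real \<times> real"
  assumes "fc c x = s"
  defines "z \<equiv> Complex (fst x) (snd x)" and "S \<equiv> Complex (fst s) (snd s)" and "cc \<equiv> complex_of_real c"
  shows "27*z^4 + (18*cnj S)*z^2 + (8*cc^3)*z + (3*(cnj S)^2 + 4*cc^2*S) = 0"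
    and "108*z^3 + 2*(18*cnj S)*z + 8*cc^3 = 2*cc*complex_of_real (jac_det_fc c x)"
proof -
  obtain u v where x: "x = (u,v)" by (cases x)
  have s: "s = (3 * v^2 - 3 * u^2 - 2 * c * u, 6 * u * v - 2 * c * v)"
    using assms(1) unfolding fc_def x by simp
  show "27*z^4 + (18*cnj S)*z^2 + (8*cc^3)*z + (3*(cnj S)^2 + 4*cc^2*S) = 0"
    unfolding z_def S_def cc_def s x
    by (simp add: complex_eq_iff power2_eq_square power3_eq_cube power4_eq_xxxx algebra_simps)
  show "108*z^3 + 2*(18*cnj S)*z + 8*cc^3 = 2*cc*complex_of_real (jac_det_fc c x)"
    unfolding z_def S_def cc_def s x jac_det_fc_def
    by (simp add: complex_eq_iff power2_eq_square power3_eq_cube algebra_simps)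
qed

theorem theorem1:
  fixes c :: real and s :: "real \<times> real"
  assumes "c \<noteq> 0"
    and "finite {x. fc c x = s}" and "card {x. fc c x = s} = 4"
    and "\<forall>x\<in>{x. fc c x = s}. jac_det_fc c x \<noteq> 0"
  shows "(\<Sum>x\<in>{x. fc c x = s}. 1 / jac_det_fc c x) = 0"
proof -
  define X where "X = {x. fc c x = s}"
  have "card X = Suc 3" using assms(3) X_def by simp
  then obtain x1 B where B: "X = insert x1 B" "x1 \<notin> B" "card B = 3"
    unfolding card_Suc_eq by blast
  then obtain x2 x3 x4 where B3: "B = {x2,x3,x4}" "x2\<noteq>x3" "x3\<noteq>x4" "x2\<noteq>x4"
    using B(3) unfolding card_3_iff by blast
  have d: "x1\<noteq>x2" "x1\<noteq>x3" "x1\<noteq>x4" using B B3 by auto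
  have X: "X = {x1,x2,x3,x4}" using B B3 by simp
  have sol: "fc c x1 = s" "fc c x2 = s" "fc c x3 = s" "fc c x4 = s" using X X_def by auto
  define Z where "Z = (\<lambda>x::real\<times>real. Complex (fst x) (snd x))"
  define S where "S = Complex (fst s) (snd s)"
  define cc where "cc = complex_of_real c"
  define A where "A = 18*cnj S"
  define Bc where "Bc = 8*cc^3"
  define C where "C = 3*(cnj S)^2 + 4*cc^2*S"
  have inj: "Z x \<noteq> Z y" if "x \<noteq> y" for x y using that unfolding Z_def by (auto simp: prod_eq_iff)
  have R: "27*(Z x)^4 + A*(Z x)^2 + Bc*(Z x) + C = 0" if "fc c x = s" for x
    using sol_facts(1)[OF that] unfolding Z_def S_def cc_def A_def Bc_def C_def by simp
  have D: "108*(Z x)^3 + 2*A*(Z x) + Bc = 2*cc*complex_of_real (jac_det_fc c x)" if "fc c x = s" for x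
    using sol_facts(2)[OF that] unfolding Z_def S_def cc_def A_def Bc_def C_def by simp
  have jnz: "jac_det_fc c x \<noteq> 0" if "fc c x = s" for x using assms(4) that by blast
  have ccnz: "cc \<noteq> 0" using assms(1) cc_def by simp
  have E: "complex_of_real (1 / jac_det_fc c x) = (2*cc/27) * (1/P)"
    if "fc c x = s" "108*(Z x)^3 + 2*A*(Z x) + Bc = 27*P" for x P
  proof -
    have "2*cc*complex_of_real (jac_det_fc c x) = 27*P" using D[OF that(1)] that(2) by simp
    then show ?thesis using jnz[OF that(1)] ccnz by (auto simp: field_simps)
  qed
  let ?z1 = "Z x1" and ?z2 = "Z x2" and ?z3 = "Z x3" and ?z4 = "Z x4"
  have zd: "?z1\<noteq>?z2" "?z1\<noteq>?z3" "?z1\<noteq>?z4" "?z2\<noteq>?z3" "?z2\<noteq>?z4" "?z3\<noteq>?z4"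
    using inj d B3 by auto
  have Rs: "27*?z1^4 + A*?z1^2 + Bc*?z1 + C = 0" "27*?z2^4 + A*?z2^2 + Bc*?z2 + C = 0"
     "27*?z3^4 + A*?z3^2 + Bc*?z3 + C = 0" "27*?z4^4 + A*?z4^2 + Bc*?z4 + C = 0" using R sol by auto
  have e1: "complex_of_real (1 / jac_det_fc c x1) = (2*cc/27) * (1/((?z1-?z2)*(?z1-?z3)*(?z1-?z4)))"
    by (rule E[OF sol(1)], rule L1) (use zd Rs in auto)
  have e2: "complex_of_real (1 / jac_det_fc c x2) = (2*cc/27) * (1/((?z2-?z1)*(?z2-?z3)*(?z2-?z4)))"
    by (rule E[OF sol(2)], rule L1) (use zd Rs in auto)
  have e3: "complex_of_real (1 / jac_det_fc c x3) = (2*cc/27) * (1/((?z3-?z1)*(?z3-?z2)*(?z3-?z4)))"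
    by (rule E[OF sol(3)], rule L1) (use zd Rs in auto)
  have e4: "complex_of_real (1 / jac_det_fc c x4) = (2*cc/27) * (1/((?z4-?z1)*(?z4-?z2)*(?z4-?z3)))"
    by (rule E[OF sol(4)], rule L1) (use zd Rs in auto)
  have sum: "(\<Sum>x\<in>X. 1 / jac_det_fc c x) = 1 / jac_det_fc c x1 + 1 / jac_det_fc c x2 + 1 / jac_det_fc c x3 + 1 / jac_det_fc c x4"
    unfolding X using d B3 by (simp add: add.assoc)
  have "complex_of_real (1 / jac_det_fc c x1 + 1 / jac_det_fc c x2 + 1 / jac_det_fc c x3 + 1 / jac_det_fc c x4)
      = (2*cc/27) * (1/((?z1-?z2)*(?z1-?z3)*(?z1-?z4)) + 1/((?z2-?z1)*(?z2-?z3)*(?z2-?z4)) + 1/((?z3-?z1)*(?z3-?z2)*(?z3-?z4)) + 1/((?z4-?z1)*(?z4-?z2)*(?z4-?z3)))"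
    unfolding of_real_add e1 e2 e3 e4 by (simp add: distrib_left)
  also have "\<dots> = 0" using L2[OF zd] by simp
  finally show ?thesis unfolding X_def[symmetric] sum by (simp only: of_real_eq_0_iff)
qed

end
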